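(* For every BST $T$ and every set $F$ of nodes of $T$ containing the root of $T$, the intervals in the extended hand $E(T,F)$ are pairwise disjoint.
   Context: Let $T$ be a BST and $F$ a set of nodes (fingers) including the root. $S(T,F)$ is the Steiner tree of $F$ in $T$ (the minimal connected subtree containing $F$). The set of pseudofingers $P(T,F)$ consists of $F$ together with all nodes of degree $3$ in $S(T,F)$. For pseudofingers $x,y$ with $x$ an ancestor of $y$ such that the path between them contains no other pseudofinger, the tendon $\tau_{x,y}$ is the set of nodes strictly between $x$ and $y$ on this path. Its half tendons are $\tau^{<}_{x,y}=\{z\in\tau_{x,y}: z<y\}$ and $\tau^{>}_{x,y}=\{z\in\tau_{x,y}:z>y\}$; $H(T,F)$ is the set of all (nonempty) half tendons. A half tendon $\tau$ is identified with the interval $[\min\tau,\max\tau]$ of keys and a pseudofinger $f$ with $[f,f]$. The extended hand is $E(T,F)=P(T,F)\cup H(T,F)$, viewed as a set of intervals. *)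

theory Defs
  imports Main "HOL-Library.Tree"
begin

text \<open>Nodes of a BST are identified with their (distinct) keys.\<close>

fun anc :: "'a tree \<Rightarrow> 'a \<Rightarrow> 'a \<Rightarrow> bool" where
  "anc Leaf a b = False"
| "anc (Node l x r) a b =
     ((a = x \<and> b \<in> set_tree (Node l x r)) \<or> anc l a b \<or> anc r a b)"

fun tedges :: "'a tree \<Rightarrow> ('a \<times> 'a) set" where
  "tedges Leaf = {}"
| "tedges (Node l x r) =
     {(x, value c) | c. c \<in> {l, r} \<and> c \<noteq> Leaf} \<union> tedges l \<union> tedges r"

text \<open>z lies on the (unique) tree path between nodes u and v.\<close>
definition on_path :: "'a tree \<Rightarrow> 'a \<Rightarrow> 'a \<Rightarrow> 'a \<Rightarrow> bool" where
  "on_path t u v z \<longleftrightarrow> (anc t z u \<or> anc t z v) \<and>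
     (\<forall>w. anc t w u \<and> anc t w v \<longrightarrow> anc t w z)"

text \<open>Node set of the Steiner tree S(T,F): union of paths between fingers.\<close>
definition steiner :: "'a tree \<Rightarrow> 'a set \<Rightarrow> 'a set" where
  "steiner t F = {z. \<exists>u\<in>F. \<exists>v\<in>F. on_path t u v z}"

definition deg_in :: "'a tree \<Rightarrow> 'a set \<Rightarrow> 'a \<Rightarrow> nat" where
  "deg_in t S x = card {y \<in> S. (x, y) \<in> tedges t \<or> (y, x) \<in> tedges t}"

definition pseudofingers :: "'a tree \<Rightarrow> 'a set \<Rightarrow> 'a set" where
  "pseudofingers t F = F \<union> {x \<in> steiner t F. deg_in t (steiner t F) x = 3}"

definition tendon :: "'a tree \<Rightarrow> 'a \<Rightarrow> 'a \<Rightarrow> 'a set" where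
  "tendon t x y = {z. anc t x z \<and> anc t z y \<and> z \<noteq> x \<and> z \<noteq> y}"

definition tendon_pair :: "'a tree \<Rightarrow> 'a set \<Rightarrow> 'a \<Rightarrow> 'a \<Rightarrow> bool" where
  "tendon_pair t F x y \<longleftrightarrow> x \<in> pseudofingers t F \<and> y \<in> pseudofingers t F \<and>
     x \<noteq> y \<and> anc t x y \<and> tendon t x y \<inter> pseudofingers t F = {}"

definition half_tendons :: "('a::linorder) tree \<Rightarrow> 'a set \<Rightarrow> 'a set set" where
  "half_tendons t F =
     {h. h \<noteq> {} \<and> (\<exists>x y. tendon_pair t F x y \<and>
        (h = {z \<in> tendon t x y. z < y} \<or> h = {z \<in> tendon t x y. z > y}))}"

text \<open>Extended hand as a set of key intervals, an interval being the pair
  of its endpoints (closed interval [a,b]).\<close>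
definition extended_hand :: "('a::linorder) tree \<Rightarrow> 'a set \<Rightarrow> ('a \<times> 'a) set" where
  "extended_hand t F =
     (\<lambda>f. (f, f)) ` pseudofingers t F \<union> (\<lambda>h. (Min h, Max h)) ` half_tendons t F"

end

theory Submission
  imports Defs
begin



lemma anc_set: "anc t a b \<Longrightarrow> a \<in> set_tree t \<and> b \<in> set_tree t"
  by (induction t) auto

lemma anc_refl: "a \<in> set_tree t \<Longrightarrow> anc t a a"
  by (induction t) auto

lemma anc_root: "b \<in> set_tree t \<Longrightarrow> anc t (value t) b"
  by (cases t) auto

lemma bstL: "bst (Node l x r) \<Longrightarrow> a \<in> set_tree l \<Longrightarrow> a < x" by auto
lemma bstR: "bst (Node l x r) \<Longrightarrow> a \<in> set_tree r \<Longrightarrow> x < a" by auto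
lemma value_in: "t \<noteq> Leaf \<Longrightarrow> value t \<in> set_tree t" by (cases t) auto

lemma bstD: assumes "bst (Node l x r)"
  shows "bst l" "bst r" "\<And>a. a \<in> set_tree l \<Longrightarrow> a \<notin> set_tree r" "\<And>a. a \<in> set_tree r \<Longrightarrow> a \<notin> set_tree l"
    "x \<notin> set_tree l" "x \<notin> set_tree r"
  using assms by (auto) (meson bstL bstR less_asym assms)+

lemma anc_to_root: "bst t \<Longrightarrow> anc t a (value t) \<Longrightarrow> a = value t"
  by (cases t) (auto dest: anc_set bstD)

lemma anc_trans: "bst t \<Longrightarrow> anc t a b \<Longrightarrow> anc t b c \<Longrightarrow> anc t a c"
proof (induction t)
  case Leaf then show ?case by simp
next
  case (Node l x r)
  note D = bstD[OF Node.prems(1)]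
  show ?case using Node.IH(1)[OF D(1)] Node.IH(2)[OF D(2)] Node.prems(2-) D(3-)
    by (auto dest: anc_set)
qed

lemma anc_antisym: "bst t \<Longrightarrow> anc t a b \<Longrightarrow> anc t b a \<Longrightarrow> a = b"
proof (induction t)
  case Leaf then show ?case by simp
next
  case (Node l x r)
  note D = bstD[OF Node.prems(1)]
  show ?case using Node.IH(1)[OF D(1)] Node.IH(2)[OF D(2)] Node.prems(2-) D(3-)
    by (auto dest: anc_set)
qed

lemma anc_chain: "bst t \<Longrightarrow> anc t a c \<Longrightarrow> anc t b c \<Longrightarrow> anc t a b \<or> anc t b a"
proof (induction t)
  case Leaf then show ?case by simp
next
  case (Node l x r)
  note D = bstD[OF Node.prems(1)]
  show ?case using Node.IH(1)[OF D(1)] Node.IH(2)[OF D(2)] Node.prems(2-) D(3-)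
    by (auto dest: anc_set)
qed

lemma lca_ex: "bst t \<Longrightarrow> u \<in> set_tree t \<Longrightarrow> v \<in> set_tree t \<Longrightarrow>
  \<exists>w. anc t w u \<and> anc t w v \<and> (\<forall>w'. anc t w' u \<and> anc t w' v \<longrightarrow> anc t w' w)"
proof (induction t)
  case Leaf then show ?case by simp
next
  case (Node l x r)
  note D = bstD[OF Node.prems(1)]
  consider "u \<in> set_tree l" "v \<in> set_tree l" | "u \<in> set_tree r" "v \<in> set_tree r"
    | "\<not> (u \<in> set_tree l \<and> v \<in> set_tree l)" "\<not> (u \<in> set_tree r \<and> v \<in> set_tree r)" by blast
  then show ?case
  proof cases
    case 1
    then obtain w where "anc l w u \<and> anc l w v \<and> (\<forall>w'. anc l w' u \<and> anc l w' v \<longrightarrow> anc l w' w)"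
      using Node.IH(1)[OF D(1)] by auto
    then show ?thesis using 1 D(3-) by (intro exI[of _ w]) (auto dest: anc_set)
  next
    case 2
    then obtain w where "anc r w u \<and> anc r w v \<and> (\<forall>w'. anc r w' u \<and> anc r w' v \<longrightarrow> anc r w' w)"
      using Node.IH(2)[OF D(2)] by auto
    then show ?thesis using 2 D(3-) by (intro exI[of _ w]) (auto dest: anc_set)
  next
    case 3
    then show ?thesis using Node.prems(2-) D(3-) by (intro exI[of _ x]) (auto dest: anc_set)
  qed
qed

lemma same_side: "bst t \<Longrightarrow> anc t w u \<Longrightarrow> anc t w v \<Longrightarrow> u \<noteq> w \<Longrightarrow> v \<noteq> w \<Longrightarrow>
  (u < w \<longleftrightarrow> v < w) \<Longrightarrow> \<exists>c. c \<noteq> w \<and> anc t w c \<and> anc t c u \<and> anc t c v"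
proof (induction t)
  case Leaf then show ?case by simp
next
  case (Node l x r)
  note D = bstD[OF Node.prems(1)]
  show ?case
  proof (cases "w = x")
    case True
    have "(u \<in> set_tree l \<and> v \<in> set_tree l) \<or> (u \<in> set_tree r \<and> v \<in> set_tree r)"
      using Node.prems True bstL[OF Node.prems(1)] bstR[OF Node.prems(1)] 
      by (auto dest: anc_set) (meson less_asym)+
    then show ?thesis
    proof
      assume a: "u \<in> set_tree l \<and> v \<in> set_tree l"
      then have "l \<noteq> Leaf" by auto
      then have "value l \<in> set_tree l" by (rule value_in)
      then show ?thesis using True D a anc_root[of u l] anc_root[of v l]
        by (intro exI[of _ "value l"]) auto
    next
      assume a: "u \<in> set_tree r \<and> v \<in> set_tree r"
      then have "r \<noteq> Leaf" by auto
      then have "value r \<in> set_tree r" by (rule value_in)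
      then show ?thesis using True D a anc_root[of u r] anc_root[of v r]
        by (intro exI[of _ "value r"]) auto
    qed
  next
    case False
    then show ?thesis using Node.IH(1)[OF D(1)] Node.IH(2)[OF D(2)] Node.prems(2-) D(3-)
      by (auto dest: anc_set) 
  qed
qed



lemma anc_subL: assumes "bst (Node l x r)" "anc (Node l x r) a b" "a \<in> set_tree l" shows "anc l a b"
proof -
  note D = bstD[OF assms(1)]
  have "a \<noteq> x" "a \<notin> set_tree r" using D assms(3) by blast+
  then have "\<not> anc r a b" using anc_set by metis
  then show ?thesis using assms(2) \<open>a \<noteq> x\<close> by simp
qed
lemma anc_subR: assumes "bst (Node l x r)" "anc (Node l x r) a b" "a \<in> set_tree r" shows "anc r a b"
proof -
  note D = bstD[OF assms(1)]
  have "a \<noteq> x" "a \<notin> set_tree l" using D assms(3) by blast+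
  then have "\<not> anc l a b" using anc_set by metis
  then show ?thesis using assms(2) \<open>a \<noteq> x\<close> by simp
qed

lemma side_pres: "bst t \<Longrightarrow> anc t v y \<Longrightarrow> anc t y s \<Longrightarrow> y \<noteq> v \<Longrightarrow> (y < v \<longleftrightarrow> s < v)"
proof (induction t)
  case Leaf then show ?case by simp
next
  case (Node l x r)
  note D = bstD[OF Node.prems(1)]
  note L = bstL[OF Node.prems(1)] and R = bstR[OF Node.prems(1)]
  show ?case
  proof (cases "v = x")
    case True
    have "y \<in> set_tree l \<or> y \<in> set_tree r" using anc_set[OF Node.prems(2)] Node.prems(4) True by simp
    then show ?thesis
    proof
      assume yl: "y \<in> set_tree l"
      then have "anc l y s" using anc_subL[OF Node.prems(1) Node.prems(3)] by blast
      then have "s \<in> set_tree l" by (meson anc_set)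
      then have "s < x" "y < x" using L yl by blast+
      then show ?thesis using True by simp
    next
      assume yr: "y \<in> set_tree r"
      then have "anc r y s" using anc_subR[OF Node.prems(1) Node.prems(3)] by blast
      then have "s \<in> set_tree r" by (meson anc_set)
      then have "x < s" "x < y" using R yr by blast+
      then show ?thesis using True by (meson less_asym)
    qed
  next
    case False
    then have "anc l v y \<or> anc r v y" using Node.prems(2) by simp
    then show ?thesis
    proof
      assume a: "anc l v y"
      then have "anc l y s" using anc_subL[OF Node.prems(1) Node.prems(3)] anc_set[OF a] by blast
      then show ?thesis using a Node.IH(1)[OF D(1)] Node.prems(4) by blast
    next
      assume a: "anc r v y"
      then have "anc r y s" using anc_subR[OF Node.prems(1) Node.prems(3)] anc_set[OF a] by blast
      then show ?thesis using a Node.IH(2)[OF D(2)] Node.prems(4) by blast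
    qed
  qed
qed

lemma interval_anc: "bst t \<Longrightarrow> anc t p q \<Longrightarrow> s \<in> set_tree t \<Longrightarrow>
   (p \<le> s \<and> s \<le> q) \<or> (q \<le> s \<and> s \<le> p) \<Longrightarrow> anc t p s"
proof (induction t)
  case Leaf then show ?case by simp
next
  case (Node l x r)
  note D = bstD[OF Node.prems(1)]
  note L = bstL[OF Node.prems(1)] and R = bstR[OF Node.prems(1)]
  show ?case
  proof (cases "p = x")
    case True
    then show ?thesis using Node.prems(3) by simp
  next
    case False
    then have "anc l p q \<or> anc r p q" using Node.prems(2) anc.simps(2)[of l x r p q] by blast
    then show ?thesis
    proof
      assume a: "anc l p q"
      then have "p \<in> set_tree l" "q \<in> set_tree l" using anc_set[of l p q] by auto
      then have "p < x" "q < x" using L by auto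
      have "s \<le> p \<or> s \<le> q" using Node.prems(4) by blast
      then have "s < x" using \<open>p < x\<close> \<open>q < x\<close> le_less_trans by blast
      then have "s \<notin> set_tree r" "s \<noteq> x" using R[of s] by (meson less_asym, simp)
      then have "s \<in> set_tree l" using Node.prems(3) by simp
      then show ?thesis using a Node.IH(1)[OF D(1) a _ Node.prems(4)] by simp
    next
      assume a: "anc r p q"
      then have "p \<in> set_tree r" "q \<in> set_tree r" using anc_set[of r p q] by auto
      then have "p > x" "q > x" using R by auto
      have "p \<le> s \<or> q \<le> s" using Node.prems(4) by blast
      then have "s > x" using \<open>p > x\<close> \<open>q > x\<close> less_le_trans by blast
      then have "s \<notin> set_tree l" "s \<noteq> x" using L[of s] by (meson less_asym, simp)
      then have "s \<in> set_tree r" using Node.prems(3) by simp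
      then show ?thesis using a Node.IH(2)[OF D(2) a _ Node.prems(4)] by simp
    qed
  qed
qed




lemma edge_anc: "bst t \<Longrightarrow> (a,b) \<in> tedges t \<Longrightarrow> anc t a b \<and> a \<noteq> b \<and> (\<forall>z. anc t a z \<and> anc t z b \<longrightarrow> z = a \<or> z = b)"
proof (induction t)
  case Leaf then show ?case by simp
next
  case (Node l x r)
  note D = bstD[OF Node.prems(1)]
  note L = bstL[OF Node.prems(1)] and R = bstR[OF Node.prems(1)]
  have E: "(a,b) \<in> tedges l \<or> (a,b) \<in> tedges r \<or> (a = x \<and> ((l \<noteq> Leaf \<and> b = value l) \<or> (r \<noteq> Leaf \<and> b = value r)))"
    using Node.prems(2) by auto
  then show ?case
  proof (elim disjE conjE)
    assume e: "(a,b) \<in> tedges l"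
    then have i: "anc l a b \<and> a \<noteq> b \<and> (\<forall>z. anc l a z \<and> anc l z b \<longrightarrow> z = a \<or> z = b)"
      using Node.IH(1)[OF D(1)] by blast
    then have "a \<in> set_tree l" "b \<in> set_tree l" using anc_set[of l a b] by auto
    have "z = a \<or> z = b" if "anc (Node l x r) a z" "anc (Node l x r) z b" for z
    proof -
      have "anc l a z" using anc_subL[OF Node.prems(1) that(1) \<open>a \<in> set_tree l\<close>] .
      then have "z \<in> set_tree l" using anc_set[of l a z] by simp
      then have "anc l z b" using anc_subL[OF Node.prems(1) that(2)] by simp
      then show ?thesis using i \<open>anc l a z\<close> by blast
    qed
    then show ?thesis using i by simp
  next
    assume e: "(a,b) \<in> tedges r"
    then have i: "anc r a b \<and> a \<noteq> b \<and> (\<forall>z. anc r a z \<and> anc r z b \<longrightarrow> z = a \<or> z = b)"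
      using Node.IH(2)[OF D(2)] by blast
    then have "a \<in> set_tree r" "b \<in> set_tree r" using anc_set[of r a b] by auto
    have "z = a \<or> z = b" if "anc (Node l x r) a z" "anc (Node l x r) z b" for z
    proof -
      have "anc r a z" using anc_subR[OF Node.prems(1) that(1) \<open>a \<in> set_tree r\<close>] .
      then have "z \<in> set_tree r" using anc_set[of r a z] by simp
      then have "anc r z b" using anc_subR[OF Node.prems(1) that(2)] by simp
      then show ?thesis using i \<open>anc r a z\<close> by blast
    qed
    then show ?thesis using i by simp
  next
    assume "a = x" "l \<noteq> Leaf" "b = value l"
    then have b: "b \<in> set_tree l" using value_in by auto
    have "z = a \<or> z = b" if "anc (Node l x r) a z" "anc (Node l x r) z b" for z
    proof (cases "z = x")
      case False
      then have "anc l z b \<or> anc r z b" using that(2) by simp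
      then have "anc l z b" using b D(3) anc_set[of r z b] by blast
      then show ?thesis using anc_to_root[OF D(1)] \<open>b = value l\<close> by blast
    qed (use \<open>a = x\<close> in auto)
    then show ?thesis using b D \<open>a = x\<close> by auto
  next
    assume "a = x" "r \<noteq> Leaf" "b = value r"
    then have b: "b \<in> set_tree r" using value_in by auto
    have "z = a \<or> z = b" if "anc (Node l x r) a z" "anc (Node l x r) z b" for z
    proof (cases "z = x")
      case False
      then have "anc l z b \<or> anc r z b" using that(2) by simp
      then have "anc r z b" using b D(4) anc_set[of l z b] by blast
      then show ?thesis using anc_to_root[OF D(2)] \<open>b = value r\<close> by blast
    qed (use \<open>a = x\<close> in auto)
    then show ?thesis using b D \<open>a = x\<close> by auto
  qed
qed

lemma child_ex: "bst t \<Longrightarrow> anc t w u \<Longrightarrow> w \<noteq> u \<Longrightarrow> \<exists>c. (w,c) \<in> tedges t \<and> anc t c u"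
proof (induction t)
  case Leaf then show ?case by simp
next
  case (Node l x r)
  note D = bstD[OF Node.prems(1)]
  show ?case
  proof (cases "w = x")
    case True
    then have "u \<in> set_tree l \<or> u \<in> set_tree r" using anc_set[OF Node.prems(2)] Node.prems(3) by simp
    then show ?thesis
    proof
      assume u: "u \<in> set_tree l"
      then have "l \<noteq> Leaf" by auto
      then show ?thesis using True u anc_root[OF u] by (intro exI[of _ "value l"]) auto
    next
      assume u: "u \<in> set_tree r"
      then have "r \<noteq> Leaf" by auto
      then show ?thesis using True u anc_root[OF u] by (intro exI[of _ "value r"]) auto
    qed
  next
    case False
    then have "anc l w u \<or> anc r w u" using Node.prems by auto
    then show ?thesis
    proof
      assume "anc l w u"
      then obtain c where "(w,c) \<in> tedges l \<and> anc l c u" using Node.IH(1)[OF D(1)] Node.prems by blast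
      then show ?thesis by auto
    next
      assume "anc r w u"
      then obtain c where "(w,c) \<in> tedges r \<and> anc r c u" using Node.IH(2)[OF D(2)] Node.prems by blast
      then show ?thesis by auto
    qed
  qed
qed

lemma parent_ex: "bst t \<Longrightarrow> anc t x w \<Longrightarrow> x \<noteq> w \<Longrightarrow> \<exists>p. (p,w) \<in> tedges t \<and> anc t x p"
proof (induction t arbitrary: x)
  case Leaf then show ?case by simp
next
  case (Node l y r)
  note D = bstD[OF Node.prems(1)]
  show ?case
  proof (cases "x = y")
    case True
    then have "w \<in> set_tree l \<or> w \<in> set_tree r" using anc_set[OF Node.prems(2)] Node.prems(3) by simp
    then show ?thesis
    proof
      assume u: "w \<in> set_tree l"
      then have ne: "l \<noteq> Leaf" by auto
      show ?thesis
      proof (cases "w = value l")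
        case True
        then show ?thesis using ne \<open>x = y\<close> u by (intro exI[of _ y]) auto
      next
        case False
        then obtain p where "(p,w) \<in> tedges l \<and> anc l (value l) p"
          using Node.IH(1)[OF D(1) anc_root[OF u]] by metis
        then show ?thesis using \<open>x = y\<close> anc_set[of _ "value _" p] by (intro exI[of _ p]) auto
      qed
    next
      assume u: "w \<in> set_tree r"
      then have ne: "r \<noteq> Leaf" by auto
      show ?thesis
      proof (cases "w = value r")
        case True
        then show ?thesis using ne \<open>x = y\<close> u by (intro exI[of _ y]) auto
      next
        case False
        then obtain p where "(p,w) \<in> tedges r \<and> anc r (value r) p"
          using Node.IH(2)[OF D(2) anc_root[OF u]] by metis
        then show ?thesis using \<open>x = y\<close> anc_set[of _ "value _" p] by (intro exI[of _ p]) auto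
      qed
    qed
  next
    case False
    then have "anc l x w \<or> anc r x w" using Node.prems by auto
    then show ?thesis
    proof
      assume "anc l x w"
      then obtain p where "(p,w) \<in> tedges l \<and> anc l x p" using Node.IH(1)[OF D(1)] Node.prems by blast
      then show ?thesis by auto
    next
      assume "anc r x w"
      then obtain p where "(p,w) \<in> tedges r \<and> anc r x p" using Node.IH(2)[OF D(2)] Node.prems by blast
      then show ?thesis by auto
    qed
  qed
qed




lemma anc_sub_steiner: assumes "bst T" "value T \<in> F" "F \<subseteq> set_tree T"
  shows "steiner T F = {z. \<exists>g\<in>F. anc T z g}"
proof
  show "steiner T F \<subseteq> {z. \<exists>g\<in>F. anc T z g}"
    unfolding steiner_def on_path_def by blast
next
  show "{z. \<exists>g\<in>F. anc T z g} \<subseteq> steiner T F"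
  proof
    fix z assume "z \<in> {z. \<exists>g\<in>F. anc T z g}"
    then obtain g where g: "g \<in> F" "anc T z g" by blast
    have zin: "z \<in> set_tree T" using anc_set[OF g(2)] by simp
    have "on_path T g (value T) z"
      unfolding on_path_def
    proof (intro conjI allI impI)
      show "anc T z g \<or> anc T z (value T)" using g by simp
    next
      fix w assume "anc T w g \<and> anc T w (value T)"
      then have "w = value T" using anc_to_root[OF assms(1)] by blast
      then show "anc T w z" using anc_root[OF zin] by simp
    qed
    then show "z \<in> steiner T F" unfolding steiner_def using g(1) assms(2) by blast
  qed
qed

definition nbrs :: "'a tree \<Rightarrow> 'a \<Rightarrow> 'a set" where
  "nbrs t m = {y. (m,y) \<in> tedges t \<or> (y,m) \<in> tedges t}"

lemma nbrs_sub: assumes "bst t" shows "nbrs t m \<subseteq> set_tree t"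
proof
  fix y assume "y \<in> nbrs t m"
  then consider "(m,y) \<in> tedges t" | "(y,m) \<in> tedges t" unfolding nbrs_def by blast
  then show "y \<in> set_tree t"
  proof cases
    case 1
    then have "anc t m y" using edge_anc[OF assms 1] by blast
    then show ?thesis using anc_set[of t m y] by simp
  next
    case 2
    then have "anc t y m" using edge_anc[OF assms 2] by blast
    then show ?thesis using anc_set[of t y m] by simp
  qed
qed

lemma card_le1: "finite A \<Longrightarrow> (\<And>a b. a \<in> A \<Longrightarrow> b \<in> A \<Longrightarrow> a = b) \<Longrightarrow> card A \<le> 1"
  by (simp add: card_le_Suc0_iff_eq)

lemma nbrs_card: assumes "bst t" shows "card (nbrs t m) \<le> 3"
proof -
  define P where "P = {y. (y,m) \<in> tedges t}"
  define CL where "CL = {c. (m,c) \<in> tedges t \<and> c < m}"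
  define CR where "CR = {c. (m,c) \<in> tedges t \<and> \<not> c < m}"
  have eq: "nbrs t m = P \<union> CL \<union> CR" unfolding nbrs_def P_def CL_def CR_def by auto
  have fin: "finite (nbrs t m)" by (rule finite_subset[OF nbrs_sub[OF assms]]) simp
  have sub: "P \<subseteq> nbrs t m" "CL \<subseteq> nbrs t m" "CR \<subseteq> nbrs t m" unfolding eq by auto
  have finP: "finite P" "finite CL" "finite CR"
    by (rule finite_subset[OF sub(1) fin], rule finite_subset[OF sub(2) fin], rule finite_subset[OF sub(3) fin])
  have "card P \<le> 1"
  proof (rule card_le1[OF finP(1)])
    fix a b assume ab: "a \<in> P" "b \<in> P"
    then have ea: "anc t a m \<and> a \<noteq> m \<and> (\<forall>z. anc t a z \<and> anc t z m \<longrightarrow> z = a \<or> z = m)"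
      and eb: "anc t b m \<and> b \<noteq> m \<and> (\<forall>z. anc t b z \<and> anc t z m \<longrightarrow> z = b \<or> z = m)"
      using edge_anc[OF assms] unfolding P_def by blast+
    have "anc t a b \<or> anc t b a" using anc_chain[OF assms] ea eb by blast
    then show "a = b"
    proof
      assume "anc t a b" then show ?thesis using ea eb spec[OF conjunct2[OF conjunct2[OF ea]], of b] by blast
    next
      assume "anc t b a" then show ?thesis using ea eb spec[OF conjunct2[OF conjunct2[OF eb]], of a] by blast
    qed
  qed
  moreover have "card CL \<le> 1"
  proof (rule card_le1[OF finP(2)])
    fix a b assume ab: "a \<in> CL" "b \<in> CL"
    then have ea: "anc t m a \<and> m \<noteq> a \<and> (\<forall>z. anc t m z \<and> anc t z a \<longrightarrow> z = m \<or> z = a)"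
      and eb: "anc t m b \<and> m \<noteq> b \<and> (\<forall>z. anc t m z \<and> anc t z b \<longrightarrow> z = m \<or> z = b)"
      using edge_anc[OF assms] unfolding CL_def by blast+
    have "a < m" "b < m" using ab unfolding CL_def by auto
    then obtain c where c: "c \<noteq> m" "anc t m c" "anc t c a" "anc t c b"
      using same_side[OF assms, of m a b] ea eb by auto
    have "c = a" using c spec[OF conjunct2[OF conjunct2[OF ea]], of c] by blast
    moreover have "c = b" using c spec[OF conjunct2[OF conjunct2[OF eb]], of c] by blast
    ultimately show "a = b" by simp
  qed
  moreover have "card CR \<le> 1"
  proof (rule card_le1[OF finP(3)])
    fix a b assume ab: "a \<in> CR" "b \<in> CR"
    then have ea: "anc t m a \<and> m \<noteq> a \<and> (\<forall>z. anc t m z \<and> anc t z a \<longrightarrow> z = m \<or> z = a)"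
      and eb: "anc t m b \<and> m \<noteq> b \<and> (\<forall>z. anc t m z \<and> anc t z b \<longrightarrow> z = m \<or> z = b)"
      using edge_anc[OF assms] unfolding CR_def by blast+
    have "\<not> a < m" "\<not> b < m" using ab unfolding CR_def by auto
    then obtain c where c: "c \<noteq> m" "anc t m c" "anc t c a" "anc t c b"
      using same_side[OF assms, of m a b] ea eb by auto
    have "c = a" using c spec[OF conjunct2[OF conjunct2[OF ea]], of c] by blast
    moreover have "c = b" using c spec[OF conjunct2[OF conjunct2[OF eb]], of c] by blast
    ultimately show "a = b" by simp
  qed
  moreover have "card (P \<union> CL \<union> CR) \<le> card (P \<union> CL) + card CR" by (rule card_Un_le)
  moreover have "card (P \<union> CL) \<le> card P + card CL" by (rule card_Un_le)
  ultimately show ?thesis unfolding eq by linarith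
qed




locale hand =
  fixes T :: "('a::linorder) tree" and F :: "'a set"
  assumes bstT: "bst T" and FT: "F \<subseteq> set_tree T" and rootF: "value T \<in> F"
begin

abbreviation "S \<equiv> steiner T F"
abbreviation "PF \<equiv> pseudofingers T F"

lemma S_eq: "S = {z. \<exists>g\<in>F. anc T z g}"
  using anc_sub_steiner[OF bstT rootF FT] .

lemma S_mem: "z \<in> S \<longleftrightarrow> (\<exists>g\<in>F. anc T z g)"
  by (subst S_eq) simp

lemma S_closed: "z \<in> S \<Longrightarrow> anc T w z \<Longrightarrow> w \<in> S"
proof -
  assume "z \<in> S" "anc T w z"
  then obtain g where "g \<in> F" "anc T z g" unfolding S_mem by blast
  then have "anc T w g" using anc_trans[OF bstT \<open>anc T w z\<close>] by simp
  then show "w \<in> S" unfolding S_mem using \<open>g \<in> F\<close> by blast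
qed

lemma S_set: "z \<in> S \<Longrightarrow> z \<in> set_tree T"
proof -
  assume "z \<in> S"
  then obtain g where "anc T z g" unfolding S_mem by blast
  then show ?thesis using anc_set[of T z g] by simp
qed

lemma F_S: "f \<in> F \<Longrightarrow> f \<in> S"
proof -
  assume f: "f \<in> F"
  then have "f \<in> set_tree T" using FT by blast
  then have "anc T f f" by (rule anc_refl)
  then show ?thesis unfolding S_mem using f by blast
qed

lemma P_S: "f \<in> PF \<Longrightarrow> f \<in> S"
  unfolding pseudofingers_def using F_S by blast

lemma branch:
  assumes "anc T x m" "x \<noteq> m" "anc T m u" "anc T m v" "u \<noteq> m" "v \<noteq> m" "u \<in> S" "v \<in> S"
    and lca: "\<forall>w. anc T w u \<and> anc T w v \<longrightarrow> anc T w m"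
  shows "m \<in> PF"
proof -
  obtain p where p: "(p,m) \<in> tedges T" "anc T x p" using parent_ex[OF bstT assms(1,2)] by blast
  obtain c1 where c1: "(m,c1) \<in> tedges T" "anc T c1 u" using child_ex[OF bstT assms(3)] assms(5) by metis
  obtain c2 where c2: "(m,c2) \<in> tedges T" "anc T c2 v" using child_ex[OF bstT assms(4)] assms(6) by metis
  have ep: "anc T p m" "p \<noteq> m" using edge_anc[OF bstT p(1)] by blast+
  have e1: "anc T m c1" "m \<noteq> c1" using edge_anc[OF bstT c1(1)] by blast+
  have e2: "anc T m c2" "m \<noteq> c2" using edge_anc[OF bstT c2(1)] by blast+
  have mS: "m \<in> S" using S_closed[OF assms(7,3)] .
  have pS: "p \<in> S" using S_closed[OF mS ep(1)] .
  have c1S: "c1 \<in> S" using S_closed[OF assms(7) c1(2)] .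
  have c2S: "c2 \<in> S" using S_closed[OF assms(8) c2(2)] .
  have "c1 \<noteq> c2"
  proof
    assume "c1 = c2"
    then have "anc T c1 m" using lca c1(2) c2(2) by blast
    then show False using anc_antisym[OF bstT e1(1)] e1(2) by blast
  qed
  have "p \<noteq> c1"
  proof
    assume "p = c1"
    then have "anc T m p" using e1(1) by simp
    then show False using anc_antisym[OF bstT ep(1)] ep(2) by blast
  qed
  have "p \<noteq> c2"
  proof
    assume "p = c2"
    then have "anc T m p" using e2(1) by simp
    then show False using anc_antisym[OF bstT ep(1)] ep(2) by blast
  qed
  define N where "N = {y \<in> S. (m, y) \<in> tedges T \<or> (y, m) \<in> tedges T}"
  have Nsub: "N \<subseteq> nbrs T m" unfolding N_def nbrs_def by blast
  have finN: "finite (nbrs T m)" by (rule finite_subset[OF nbrs_sub[OF bstT]]) simp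
  have "card N \<le> 3" using card_mono[OF finN Nsub] nbrs_card[OF bstT, of m] by linarith
  moreover have "{p, c1, c2} \<subseteq> N" unfolding N_def using pS c1S c2S p(1) c1(1) c2(1) by blast
  then have "card {p, c1, c2} \<le> card N" using card_mono[OF finite_subset[OF Nsub finN]] by blast
  moreover have "card {p, c1, c2} = 3"
    using \<open>c1 \<noteq> c2\<close> \<open>p \<noteq> c1\<close> \<open>p \<noteq> c2\<close> by simp
  ultimately have "card N = 3" by linarith
  moreover have "deg_in T S m = card N" unfolding deg_in_def N_def by (rule refl)
  ultimately have "deg_in T S m = 3" by simp
  then have "m \<in> {x \<in> S. deg_in T S x = 3}" using mS by simp
  then show ?thesis unfolding pseudofingers_def by (rule UnI2)
qed

end




context hand begin

lemma tendon_P: "tendon_pair T F x y \<Longrightarrow> z \<in> tendon T x y \<Longrightarrow> z \<notin> PF"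
  unfolding tendon_pair_def by blast

lemma tendonD: "z \<in> tendon T x y \<Longrightarrow> anc T x z \<and> anc T z y \<and> z \<noteq> x \<and> z \<noteq> y"
  unfolding tendon_def by simp

lemma tendonI: "anc T x z \<Longrightarrow> anc T z y \<Longrightarrow> z \<noteq> x \<Longrightarrow> z \<noteq> y \<Longrightarrow> z \<in> tendon T x y"
  unfolding tendon_def by simp

lemma pairD: "tendon_pair T F x y \<Longrightarrow> x \<in> PF \<and> y \<in> PF \<and> x \<noteq> y \<and> anc T x y"
  unfolding tendon_pair_def by simp

lemma pair_x_unique:
  assumes p1: "tendon_pair T F x1 y1" and p2: "tendon_pair T F x2 y2"
    and z1: "z \<in> tendon T x1 y1" and z2: "z \<in> tendon T x2 y2"
    and a: "anc T x1 x2"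
  shows "x1 = x2"
proof (rule ccontr)
  assume ne: "x1 \<noteq> x2"
  note t1 = tendonD[OF z1] and t2 = tendonD[OF z2]
  have "anc T x2 y1" using anc_trans[OF bstT] t2 t1 by blast
  moreover have "x2 \<noteq> y1"
  proof
    assume "x2 = y1"
    then have "anc T y1 z" using t2 by simp
    then show False using anc_antisym[OF bstT] t1 by blast
  qed
  ultimately have "x2 \<in> tendon T x1 y1" using tendonI[OF a] ne by blast
  moreover have "x2 \<in> PF" using pairD[OF p2] by blast
  ultimately show False using tendon_P[OF p1] by blast
qed

lemma pair_unique:
  assumes p1: "tendon_pair T F x1 y1" and p2: "tendon_pair T F x2 y2"
    and z1: "z \<in> tendon T x1 y1" and z2: "z \<in> tendon T x2 y2"
  shows "x1 = x2 \<and> y1 = y2"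
proof -
  note t1 = tendonD[OF z1] and t2 = tendonD[OF z2]
  have "anc T x1 x2 \<or> anc T x2 x1" using anc_chain[OF bstT] t1 t2 by blast
  then have x: "x1 = x2" using pair_x_unique[OF p1 p2 z1 z2] pair_x_unique[OF p2 p1 z2 z1] by metis
  have y1in: "y1 \<in> set_tree T" and y2in: "y2 \<in> set_tree T"
    using anc_set[of T z y1] anc_set[of T z y2] t1 t2 by auto
  obtain m where m: "anc T m y1" "anc T m y2" "\<forall>w'. anc T w' y1 \<and> anc T w' y2 \<longrightarrow> anc T w' m"
    using lca_ex[OF bstT y1in y2in] by blast
  have zm: "anc T z m" using m(3) t1 t2 by blast
  have xm: "anc T x1 m" using anc_trans[OF bstT] t1 zm by blast
  have "x1 \<noteq> m"
  proof
    assume "x1 = m"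
    then have "anc T z x1" using zm by simp
    then show False using anc_antisym[OF bstT] t1 by blast
  qed
  have y1P: "y1 \<in> PF" and y2P: "y2 \<in> PF" using pairD[OF p1] pairD[OF p2] by blast+
  show ?thesis
  proof (rule ccontr)
    assume "\<not> (x1 = x2 \<and> y1 = y2)"
    then have yne: "y1 \<noteq> y2" using x by blast
    consider "m = y1" | "m = y2" | "m \<noteq> y1" "m \<noteq> y2" by blast
    then show False
    proof cases
      case 1
      then have "y1 \<in> tendon T x1 y2" using tendonI[of x1 y1 y2] xm m(2) \<open>x1 \<noteq> m\<close> yne by simp
      then show False using tendon_P[OF p2] x y1P by simp
    next
      case 2
      then have "y2 \<in> tendon T x1 y1" using tendonI[of x1 y2 y1] xm m(1) \<open>x1 \<noteq> m\<close> yne by simp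
      then show False using tendon_P[OF p1] y2P by simp
    next
      case 3
      have "m \<in> PF"
        using branch[OF xm \<open>x1 \<noteq> m\<close> m(1) m(2)] 3 P_S[OF y1P] P_S[OF y2P] m(3) by metis
      moreover have "m \<in> tendon T x1 y1" using tendonI[of x1 m y1] xm m(1) \<open>x1 \<noteq> m\<close> 3 by simp
      ultimately show False using tendon_P[OF p1] by simp
    qed
  qed
qed

lemma convex:
  assumes p: "tendon_pair T F x y" and pt: "p \<in> tendon T x y" and qt: "q \<in> tendon T x y"
    and sS: "s \<in> S" and ps: "p \<le> s" and sq: "s \<le> q" and nys: "\<not> anc T y s"
  shows "s \<in> tendon T x y"
proof -
  note tp = tendonD[OF pt] and tq = tendonD[OF qt]
  have sin: "s \<in> set_tree T" using S_set[OF sS] .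
  have "anc T p q \<or> anc T q p" using anc_chain[OF bstT] tp tq by blast
  then obtain u where u: "u \<in> tendon T x y" "anc T u s"
  proof
    assume "anc T p q"
    then have "anc T p s" using interval_anc[OF bstT _ sin] ps sq by blast
    then show ?thesis using that pt by blast
  next
    assume "anc T q p"
    then have "anc T q s" using interval_anc[OF bstT _ sin] ps sq by blast
    then show ?thesis using that qt by blast
  qed
  note tu = tendonD[OF u(1)]
  have yin: "y \<in> set_tree T" using anc_set[of T u y] tu by simp
  obtain w where w: "anc T w s" "anc T w y" "\<forall>w'. anc T w' s \<and> anc T w' y \<longrightarrow> anc T w' w"
    using lca_ex[OF bstT sin yin] by blast
  have uw: "anc T u w" using w(3) u(2) tu by blast
  have xw: "anc T x w" using anc_trans[OF bstT] tu uw by blast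
  have "x \<noteq> w"
  proof
    assume "x = w"
    then have "anc T u x" using uw by simp
    then show False using anc_antisym[OF bstT] tu by blast
  qed
  have "w \<noteq> y" using w(1) nys by blast
  show ?thesis
  proof (cases "w = s")
    case True
    have "s \<noteq> y" using nys anc_refl[OF sin] by blast
    then show ?thesis using tendonI[of x s y] xw w(2) \<open>x \<noteq> w\<close> True by simp
  next
    case False
    have yP: "y \<in> PF" using pairD[OF p] by blast
    have "w \<in> PF"
      using branch[OF xw \<open>x \<noteq> w\<close> w(1) w(2)] False \<open>w \<noteq> y\<close> sS P_S[OF yP] w(3) by metis
    moreover have "w \<in> tendon T x y" using tendonI[of x w y] xw w(2) \<open>x \<noteq> w\<close> \<open>w \<noteq> y\<close> by simp
    ultimately show ?thesis using tendon_P[OF p] by simp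
  qed
qed

lemma convex_lt:
  assumes p: "tendon_pair T F x y" and pt: "p \<in> {z \<in> tendon T x y. z < y}" and qt: "q \<in> {z \<in> tendon T x y. z < y}"
    and sS: "s \<in> S" and ps: "p \<le> s" and sq: "s \<le> q"
  shows "s \<in> {z \<in> tendon T x y. z < y}"
proof -
  have tq: "anc T q y" "q \<noteq> y" using tendonD[of q x y] qt by auto
  have "q < y" using qt by simp
  have "\<not> anc T y s"
  proof
    assume ys: "anc T y s"
    have "(y < q) = (s < q)" using side_pres[OF bstT tq(1) ys] tq(2) by blast
    then have "\<not> s < q" using \<open>q < y\<close> by auto
    then have "s = q" using sq by auto
    then show False using anc_antisym[OF bstT tq(1)] ys tq(2) by blast
  qed
  then have "s \<in> tendon T x y" using convex[OF p _ _ sS ps sq] pt qt by blast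
  moreover have "s < y" using sq \<open>q < y\<close> by auto
  ultimately show ?thesis by simp
qed

lemma convex_gt:
  assumes p: "tendon_pair T F x y" and pt: "p \<in> {z \<in> tendon T x y. z > y}" and qt: "q \<in> {z \<in> tendon T x y. z > y}"
    and sS: "s \<in> S" and ps: "p \<le> s" and sq: "s \<le> q"
  shows "s \<in> {z \<in> tendon T x y. z > y}"
proof -
  have tp: "anc T p y" "p \<noteq> y" using tendonD[of p x y] pt by auto
  have "p > y" using pt by simp
  have "\<not> anc T y s"
  proof
    assume ys: "anc T y s"
    have "(y < p) = (s < p)" using side_pres[OF bstT tp(1) ys] tp(2) by blast
    then have "s < p" using \<open>p > y\<close> by auto
    then show False using ps by auto
  qed
  then have "s \<in> tendon T x y" using convex[OF p _ _ sS ps sq] pt qt by blast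
  moreover have "s > y" using ps \<open>p > y\<close> by auto
  ultimately show ?thesis by simp
qed

end




context hand begin

definition Cls :: "'a set set" where
  "Cls = (\<lambda>f. {f}) ` PF \<union> half_tendons T F"

lemma tendon_S: "tendon_pair T F x y \<Longrightarrow> z \<in> tendon T x y \<Longrightarrow> z \<in> S"
  using S_closed P_S pairD tendonD by metis

lemma tendon_fin: "finite (tendon T x y)"
proof (rule finite_subset[of _ "set_tree T"])
  show "tendon T x y \<subseteq> set_tree T"
  proof
    fix z assume "z \<in> tendon T x y"
    then have "anc T z y" using tendonD by blast
    then show "z \<in> set_tree T" using anc_set[of T z y] by simp
  qed
qed simp

lemma cls_props:
  assumes X: "X \<in> Cls"
  shows "finite X \<and> X \<noteq> {} \<and> X \<subseteq> S \<and> (\<forall>s\<in>S. Min X \<le> s \<and> s \<le> Max X \<longrightarrow> s \<in> X)"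
proof (cases "X \<in> (\<lambda>f. {f}) ` PF")
  case True
  then obtain f where "X = {f}" "f \<in> PF" by blast
  then show ?thesis using P_S by auto
next
  case False
  then have "X \<in> half_tendons T F" using X unfolding Cls_def by blast
  then obtain x y where ne: "X \<noteq> {}" and p: "tendon_pair T F x y"
    and h: "X = {z \<in> tendon T x y. z < y} \<or> X = {z \<in> tendon T x y. z > y}"
    unfolding half_tendons_def by blast
  have fin: "finite X" using h tendon_fin by auto
  have sub: "X \<subseteq> S" using h tendon_S[OF p] by auto
  have mm: "Min X \<in> X" "Max X \<in> X" using fin ne by auto
  have "\<forall>s\<in>S. Min X \<le> s \<and> s \<le> Max X \<longrightarrow> s \<in> X"
  proof (intro ballI impI)
    fix s assume s: "s \<in> S" "Min X \<le> s \<and> s \<le> Max X"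
    from h show "s \<in> X"
    proof
      assume hx: "X = {z \<in> tendon T x y. z < y}"
      show ?thesis using convex_lt[OF p _ _ s(1), of "Min X" "Max X"] mm s(2) hx by simp
    next
      assume hx: "X = {z \<in> tendon T x y. z > y}"
      show ?thesis using convex_gt[OF p _ _ s(1), of "Min X" "Max X"] mm s(2) hx by simp
    qed
  qed
  then show ?thesis using fin ne sub by blast
qed

lemma cls_disj:
  assumes X: "X \<in> Cls" and Y: "Y \<in> Cls" and zX: "z \<in> X" and zY: "z \<in> Y"
  shows "X = Y"
proof -
  have H: "tendon_pair T F x y \<and> (h = {z \<in> tendon T x y. z < y} \<or> h = {z \<in> tendon T x y. z > y})"
    if "h \<in> half_tendons T F" "\<not> (\<exists>x y. tendon_pair T F x y \<and> (h = {z \<in> tendon T x y. z < y} \<or> h = {z \<in> tendon T x y. z > y}))"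
    for h x y using that unfolding half_tendons_def by blast
  have notP: "z \<notin> PF" if "h \<in> half_tendons T F" "z \<in> h" for h
  proof -
    obtain x y where p: "tendon_pair T F x y" and "h \<subseteq> tendon T x y"
      using \<open>h \<in> half_tendons T F\<close> unfolding half_tendons_def by blast
    then show ?thesis using tendon_P[OF p] \<open>z \<in> h\<close> by blast
  qed
  consider (PP) "X \<in> (\<lambda>f. {f}) ` PF" "Y \<in> (\<lambda>f. {f}) ` PF"
    | (PH) "X \<in> (\<lambda>f. {f}) ` PF" "Y \<in> half_tendons T F"
    | (HP) "X \<in> half_tendons T F" "Y \<in> (\<lambda>f. {f}) ` PF"
    | (HH) "X \<in> half_tendons T F" "Y \<in> half_tendons T F"
    using X Y unfolding Cls_def by blast
  then show ?thesis
  proof cases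
    case PP
    then show ?thesis using zX zY by auto
  next
    case PH
    then have "z \<in> PF" using zX by auto
    then show ?thesis using notP[OF PH(2) zY] by blast
  next
    case HP
    then have "z \<in> PF" using zY by auto
    then show ?thesis using notP[OF HP(1) zX] by blast
  next
    case HH
    obtain x1 y1 where p1: "tendon_pair T F x1 y1"
      and h1: "X = {z \<in> tendon T x1 y1. z < y1} \<or> X = {z \<in> tendon T x1 y1. z > y1}"
      using HH(1) unfolding half_tendons_def by blast
    obtain x2 y2 where p2: "tendon_pair T F x2 y2"
      and h2: "Y = {z \<in> tendon T x2 y2. z < y2} \<or> Y = {z \<in> tendon T x2 y2. z > y2}"
      using HH(2) unfolding half_tendons_def by blast
    have z1: "z \<in> tendon T x1 y1" using h1 zX by auto
    have z2: "z \<in> tendon T x2 y2" using h2 zY by auto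
    have eq: "x1 = x2" "y1 = y2" using pair_unique[OF p1 p2 z1 z2] by auto
    show ?thesis using h1 h2 zX zY unfolding eq by auto
  qed
qed

lemma E_eq: "extended_hand T F = (\<lambda>X. (Min X, Max X)) ` Cls"
  unfolding extended_hand_def Cls_def by (auto simp: image_Un image_image)

lemma main: "\<forall>I\<in>extended_hand T F. \<forall>J\<in>extended_hand T F. I \<noteq> J \<longrightarrow>
           {fst I..snd I} \<inter> {fst J..snd J} = {}"
proof (intro ballI impI)
  fix I J assume I: "I \<in> extended_hand T F" and J: "J \<in> extended_hand T F" and ne: "I \<noteq> J"
  obtain X where X: "X \<in> Cls" "I = (Min X, Max X)" using I unfolding E_eq by blast
  obtain Y where Y: "Y \<in> Cls" "J = (Min Y, Max Y)" using J unfolding E_eq by blast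
  note PX = cls_props[OF X(1)] and PY = cls_props[OF Y(1)]
  have mX: "Min X \<in> X" "Max X \<in> X" using PX by auto
  have mY: "Min Y \<in> Y" "Max Y \<in> Y" using PY by auto
  show "{fst I..snd I} \<inter> {fst J..snd J} = {}"
  proof (rule ccontr)
    assume "{fst I..snd I} \<inter> {fst J..snd J} \<noteq> {}"
    then obtain t0 where "t0 \<in> {fst I..snd I}" "t0 \<in> {fst J..snd J}" by blast
    then have t: "Min X \<le> t0" "t0 \<le> Max X" "Min Y \<le> t0" "t0 \<le> Max Y" using X(2) Y(2) by auto
    have "\<exists>z. z \<in> X \<and> z \<in> Y"
    proof (cases "Min X \<le> Min Y")
      case True
      have "Min Y \<in> S" using PY mY by blast
      then have "Min Y \<in> X" using PX True t order_trans by blast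
      then show ?thesis using mY by blast
    next
      case False
      have "Min X \<in> S" using PX mX by blast
      then have "Min X \<in> Y" using PY False t order_trans by (meson linear)
      then show ?thesis using mX by blast
    qed
    then have "X = Y" using cls_disj[OF X(1) Y(1)] by blast
    then show False using ne X(2) Y(2) by simp
  qed
qed

end

theorem lemma15:
  fixes T :: "('a::linorder) tree" and F :: "'a set"
  assumes "bst T" and "T \<noteq> Leaf"
    and "F \<subseteq> set_tree T" and "value T \<in> F"
  shows "\<forall>I\<in>extended_hand T F. \<forall>J\<in>extended_hand T F. I \<noteq> J \<longrightarrow>
           {fst I..snd I} \<inter> {fst J..snd J} = {}"
proof -
  interpret hand T F using assms by unfold_locales auto
  show ?thesis by (rule main)
qed



end
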